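(* Let $\Psi=\begin{bmatrix}\Psi_{11}&\Psi_{12}\\ \Psi_{12}^\top&\Psi_{22}\end{bmatrix}\in\mathbb{R}^{(p+q)\times(p+q)}$ be symmetric with $\Psi_{11}\in\mathbb{R}^{p\times p}$, $\Psi_{22}<0$ and $\Psi|\Psi_{22}:=\Psi_{11}-\Psi_{12}\Psi_{22}^{-1}\Psi_{12}^\top>0$, and let $\mathcal M:=\{Z\in\mathbb{R}^{p\times q}:\begin{bmatrix}I\\Z^\top\end{bmatrix}^\top\Psi\begin{bmatrix}I\\Z^\top\end{bmatrix}\ge0\}$. Let $V\in\mathbb{R}^{q\times\hat q}$ and $W\in\mathbb{R}^{p\times\hat p}$ have full column rank, with $\hat p\le p$, $\hat q\le q$, and define $\mathcal M_{V,W}:=\{W^\top ZV:Z\in\mathcal M\}$ and $$\Psi_{V,W}:=\begin{bmatrix} W^\top\big(\Psi|\Psi_{22}+\Psi_{12}\Psi_{22}^{-1}V(V^\top\Psi_{22}^{-1}V)^{-1}V^\top\Psi_{22}^{-1}\Psi_{12}^\top\big)W & W^\top\Psi_{12}\Psi_{22}^{-1}V(V^\top\Psi_{22}^{-1}V)^{-1}\\ (V^\top\Psi_{22}^{-1}V)^{-1}V^\top\Psi_{22}^{-1}\Psi_{12}^\top W&(V^\top\Psi_{22}^{-1}V)^{-1}\end{bmatrix}.$$ Then $$\mathcal M_{V,W}=\Big\{\hat Z\in\mathbb{R}^{\hat p\times\hat q}:\begin{bmatrix}I\\ \hat Z^\top\end{bmatrix}^\top\Psi_{V,W}\begin{bmatrix}I\\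 \hat Z^\top\end{bmatrix}\ge0\Big\}.$$ *)

theory Defs
  imports "HOL-Analysis.Analysis"
begin

definition blk :: "real^'c1^'r1 \<Rightarrow> real^'c2^'r1 \<Rightarrow> real^'c1^'r2 \<Rightarrow> real^'c2^'r2
                    \<Rightarrow> real^('c1 + 'c2)^('r1 + 'r2)" where
  "blk A B C D = (\<chi> i j. case i of
       Inl r \<Rightarrow> (case j of Inl c \<Rightarrow> A $ r $ c | Inr c \<Rightarrow> B $ r $ c)
     | Inr r \<Rightarrow> (case j of Inl c \<Rightarrow> C $ r $ c | Inr c \<Rightarrow> D $ r $ c))"

definition vstack :: "real^'c^'r1 \<Rightarrow> real^'c^'r2 \<Rightarrow> real^'c^('r1 + 'r2)" where
  "vstack A B = (\<chi> i j. case i of Inl r \<Rightarrow> A $ r $ j | Inr r \<Rightarrow> B $ r $ j)"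

definition psd :: "real^'n^'n \<Rightarrow> bool" where
  "psd A \<longleftrightarrow> transpose A = A \<and> (\<forall>x. 0 \<le> x \<bullet> (A *v x))"

definition posdef :: "real^'n^'n \<Rightarrow> bool" where
  "posdef A \<longleftrightarrow> transpose A = A \<and> (\<forall>x. x \<noteq> 0 \<longrightarrow> 0 < x \<bullet> (A *v x))"

definition negdef :: "real^'n^'n \<Rightarrow> bool" where
  "negdef A \<longleftrightarrow> transpose A = A \<and> (\<forall>x. x \<noteq> 0 \<longrightarrow> x \<bullet> (A *v x) < 0)"

definition qmi_set :: "real^('p + 'q)^('p + 'q) \<Rightarrow> (real^'q^'p) set" where
  "qmi_set Psi = {Z. psd (transpose (vstack (mat 1) (transpose Z)) ** Psi ** vstack (mat 1) (transpose Z))}"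

end

theory Submission imports Defs begin

declare transpose_matrix_vector[simp del]

lemma mm_add_r: "((A::real^'n^'m) + B) ** (C::real^'k^'n) = A ** C + B ** C"
  by (vector matrix_matrix_mult_def sum.distrib[symmetric] field_simps)
lemma mm_diff_l: "(A::real^'n^'m) ** ((B::real^'k^'n) - C) = A ** B - A ** C"
  by (vector matrix_matrix_mult_def sum_subtractf[symmetric] field_simps)
lemma mm_diff_r: "((A::real^'n^'m) - B) ** (C::real^'k^'n) = A ** C - B ** C"
  by (vector matrix_matrix_mult_def sum_subtractf[symmetric] field_simps)
lemma mm_neg_l: "(- (A::real^'n^'m)) ** (C::real^'k^'n) = - (A ** C)"
  by (vector matrix_matrix_mult_def sum_negf[symmetric])
lemma mm_neg_r: "(A::real^'n^'m) ** (- (C::real^'k^'n)) = - (A ** C)"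
  by (vector matrix_matrix_mult_def sum_negf[symmetric])
lemma tr_add: "transpose ((A::real^'n^'m) + B) = transpose A + transpose B"
  by (simp add: transpose_def vec_eq_iff)
lemma tr_diff: "transpose ((A::real^'n^'m) - B) = transpose A - transpose B"
  by (simp add: transpose_def vec_eq_iff)
lemma tr_neg: "transpose (- (A::real^'n^'m)) = - transpose A"
  by (simp add: transpose_def vec_eq_iff)
lemma mv_neg: "(- (A::real^'n^'m)) *v x = - (A *v x)"
  by (vector matrix_vector_mult_def sum_negf[symmetric])

lemma mv_neg_r: "(A::real^'n^'m) *v (- x) = - (A *v x)"
  by (vector matrix_vector_mult_def sum_negf[symmetric])

lemma dot_mv: "inner x ((A::real^'n^'m) *v y) = inner (transpose A *v x) y"
  by (simp add: transpose_matrix_vector dot_lmul_matrix)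

lemma qf_prod: "inner x (((A::real^'n^'m) ** B ** transpose A) *v x)
   = inner (transpose A *v x) (B *v (transpose A *v x))"
  by (simp add: matrix_vector_mul_assoc[symmetric] dot_mv)

lemma minv: assumes "invertible (A::real^'n^'n)"
  shows "A ** matrix_inv A = mat 1" "matrix_inv A ** A = mat 1"
proof -
  have "\<exists>A'. A ** A' = mat 1 \<and> A' ** A = mat 1" using assms invertible_def by blast
  hence "A ** matrix_inv A = mat 1 \<and> matrix_inv A ** A = mat 1"
    unfolding matrix_inv_def by (rule someI_ex)
  thus "A ** matrix_inv A = mat 1" "matrix_inv A ** A = mat 1" by auto
qed

lemma minv_unique: assumes "(A::real^'n^'n) ** B = mat 1" shows "matrix_inv A = B"
proof -
  have inv: "invertible A" using assms invertible_right_inverse by blast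
  have "matrix_inv A = matrix_inv A ** (A ** B)" using assms by simp
  also have "\<dots> = B" by (simp add: matrix_mul_assoc minv(2)[OF inv])
  finally show ?thesis .
qed

lemma minv_sym: assumes "invertible (A::real^'n^'n)" "transpose A = A"
  shows "transpose (matrix_inv A) = matrix_inv A"
proof -
  have "A ** transpose (matrix_inv A) = mat 1"
    by (metis assms matrix_transpose_mul minv(2) transpose_mat)
  thus ?thesis using minv_unique by metis
qed

lemma inv_of_ker: assumes "\<And>x. (A::real^'n^'n) *v x = 0 \<Longrightarrow> x = 0" shows "invertible A"
  using assms invertible_left_inverse matrix_left_invertible_ker by blast

lemma negdef_inv: "negdef A \<Longrightarrow> invertible A"
  unfolding negdef_def by (metis inv_of_ker inner_zero_right order.irrefl)
lemma posdef_inv: "posdef A \<Longrightarrow> invertible A"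
  unfolding posdef_def by (metis inv_of_ker inner_zero_right order.irrefl)

lemma negdef_cong: assumes "negdef (M::real^'n^'n)" "inj ((*v) (A::real^'k^'n))"
  shows "negdef (transpose A ** M ** A)"
  unfolding negdef_def
proof safe
  show "transpose (transpose A ** M ** A) = transpose A ** M ** A"
    using assms(1) by (simp add: negdef_def matrix_transpose_mul matrix_mul_assoc)
  fix x :: "real^'k" assume "x \<noteq> 0"
  hence "A *v x \<noteq> 0" using assms(2) by (metis inj_eq matrix_vector_mult_0_right)
  hence "inner (A *v x) (M *v (A *v x)) < 0" using assms(1) negdef_def by blast
  thus "inner x ((transpose A ** M ** A) *v x) < 0"
    by (simp add: matrix_vector_mul_assoc[symmetric] dot_mv)
qed

lemma posdef_cong: assumes "posdef (M::real^'n^'n)" "inj ((*v) (A::real^'k^'n))"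
  shows "posdef (transpose A ** M ** A)"
  unfolding posdef_def
proof safe
  show "transpose (transpose A ** M ** A) = transpose A ** M ** A"
    using assms(1) by (simp add: posdef_def matrix_transpose_mul matrix_mul_assoc)
  fix x :: "real^'k" assume "x \<noteq> 0"
  hence "A *v x \<noteq> 0" using assms(2) by (metis inj_eq matrix_vector_mult_0_right)
  hence "0 < inner (A *v x) (M *v (A *v x))" using assms(1) posdef_def by blast
  thus "0 < inner x ((transpose A ** M ** A) *v x)"
    by (simp add: matrix_vector_mul_assoc[symmetric] dot_mv)
qed

lemma negdef_minv: assumes "negdef (A::real^'n^'n)" shows "negdef (matrix_inv A)"
  unfolding negdef_def
proof safe
  have i: "invertible A" using assms negdef_inv by blast
  show "transpose (matrix_inv A) = matrix_inv A" using minv_sym i assms negdef_def by blast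
  fix x :: "real^'n" assume "x \<noteq> 0"
  let ?y = "matrix_inv A *v x"
  have ay: "A *v ?y = x" by (simp add: matrix_vector_mul_assoc minv(1)[OF i])
  hence "?y \<noteq> 0" using \<open>x \<noteq> 0\<close> by auto
  hence "inner ?y (A *v ?y) < 0" using assms negdef_def by blast
  thus "inner x (matrix_inv A *v x) < 0" using ay by (simp add: inner_commute)
qed

lemma sum_plus_UNIV: "sum (f::('a::finite + 'b::finite) \<Rightarrow> real) UNIV = sum (\<lambda>i. f (Inl i)) UNIV + sum (\<lambda>i. f (Inr i)) UNIV"
  by (subst UNIV_Plus_UNIV[symmetric], subst sum.Plus) (auto simp: o_def)

lemma blk_vstack: "blk A B C D ** vstack X Y = vstack (A ** X + B ** Y) (C ** X + D ** Y)"
  by (simp add: vec_eq_iff blk_def vstack_def matrix_matrix_mult_def sum_plus_UNIV split: sum.splits)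

lemma tvstack_vstack: "transpose (vstack P Q) ** vstack R S = transpose P ** R + transpose Q ** S"
  by (simp add: vec_eq_iff transpose_def vstack_def matrix_matrix_mult_def sum_plus_UNIV)

lemma quad_blk: "transpose (vstack (mat 1) (transpose Z)) ** blk A B C D ** vstack (mat 1) (transpose Z)
   = A + B ** transpose Z + Z ** C + Z ** D ** transpose Z"
  by (simp add: matrix_mul_assoc[symmetric] blk_vstack tvstack_vstack matrix_add_ldistrib)

lemma complete_sq:
  fixes A :: "real^'p^'p" and B :: "real^'q^'p" and D :: "real^'q^'q" and Z :: "real^'q^'p"
  assumes "transpose D = D" "invertible D"
  shows "A + B ** transpose Z + Z ** transpose B + Z ** D ** transpose Z
    = (A - B ** matrix_inv D ** transpose B) + (Z + B ** matrix_inv D) ** D ** transpose (Z + B ** matrix_inv D)"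
proof -
  have s: "transpose (matrix_inv D) = matrix_inv D" using minv_sym assms by blast
  have e1: "B ** matrix_inv D ** D = B" by (simp add: matrix_mul_assoc[symmetric] minv(2)[OF assms(2)])
  have e2: "Z ** D ** matrix_inv D = Z" by (simp add: matrix_mul_assoc[symmetric] minv(1)[OF assms(2)])
  have e3: "Z ** D ** matrix_inv D ** transpose B = Z ** transpose B" by (simp add: e2)
  have e4: "B ** matrix_inv D ** D ** matrix_inv D ** transpose B = B ** matrix_inv D ** transpose B" by (simp add: e1)
  have e5: "B ** matrix_inv D ** D ** transpose Z = B ** transpose Z" by (simp add: e1)
  show ?thesis
    by (simp add: tr_add matrix_transpose_mul s mm_add_r matrix_add_ldistrib matrix_mul_assoc e3 e4 e5)
qed

lemma psd_form:
  fixes P :: "real^'p^'p" and X :: "real^'q^'p" and D :: "real^'q^'q"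
  assumes "transpose P = P" "transpose D = D"
  shows "psd (P + X ** D ** transpose X) \<longleftrightarrow>
     (\<forall>x. 0 \<le> inner x (P *v x) + inner (transpose X *v x) (D *v (transpose X *v x)))"
proof -
  have "transpose (P + X ** D ** transpose X) = P + X ** D ** transpose X"
    using assms by (simp add: tr_add matrix_transpose_mul matrix_mul_assoc)
  thus ?thesis unfolding psd_def
    by (simp add: matrix_vector_mult_add_rdistrib inner_add_right qf_prod)
qed

lemma QL:
  fixes M :: "real^'n^'n" and A :: "real^'k^'n"
  assumes sym: "transpose M = M" and ps: "\<And>x. 0 \<le> inner x (M *v x)"
    and inv: "invertible (transpose A ** M ** A)"
  shows "inner (transpose A *v (M *v x)) (matrix_inv (transpose A ** M ** A) *v (transpose A *v (M *v x)))
         \<le> inner x (M *v x)"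
proof -
  let ?G = "transpose A ** M ** A"
  let ?Gi = "matrix_inv ?G"
  let ?b = "transpose A *v (M *v x)"
  let ?w = "?Gi *v ?b"
  have "?G *v ?w = (?G ** ?Gi) *v ?b" by (rule matrix_vector_mul_assoc)
  hence GGi: "?G *v ?w = ?b" by (simp only: minv(1)[OF inv] matrix_vector_mul_lid)
  have Gsym: "transpose ?G = ?G" using sym by (simp add: matrix_transpose_mul matrix_mul_assoc)
  have Gis: "transpose ?Gi = ?Gi" using minv_sym[OF inv Gsym] .
  have c1: "inner (A *v ?w) (M *v x) = inner ?b ?w"
    by (subst inner_commute) (rule dot_mv)
  have c1': "inner x (M *v (A *v ?w)) = inner ?b ?w"
    using c1 dot_mv[of x M "A *v ?w"] sym by (simp add: inner_commute)
  have c2: "inner (A *v ?w) (M *v (A *v ?w)) = inner ?b ?w"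
  proof -
    have "inner (A *v ?w) (M *v (A *v ?w)) = inner ?w (?G *v ?w)"
      by (simp add: matrix_vector_mul_assoc[symmetric] dot_mv)
    also have "\<dots> = inner ?b ?w" using GGi by (simp add: inner_commute)
    finally show ?thesis .
  qed
  have "0 \<le> inner (x - A *v ?w) (M *v (x - A *v ?w))" using ps by blast
  also have "\<dots> = inner x (M *v x) - inner ?b ?w"
    by (simp add: matrix_vector_mult_diff_distrib inner_diff_left inner_diff_right c1 c1' c2)
  finally show ?thesis by (simp add: inner_commute)
qed

lemma char:
  fixes A :: "real^'p^'p" and B :: "real^'q^'p" and D :: "real^'q^'q" and Z :: "real^'q^'p"
  assumes "transpose A = A" "transpose D = D" "invertible D"
  shows "Z \<in> qmi_set (blk A B (transpose B) D) \<longleftrightarrow>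
    (\<forall>x. 0 \<le> inner x ((A - B ** matrix_inv D ** transpose B) *v x)
        + inner (transpose (Z + B ** matrix_inv D) *v x) (D *v (transpose (Z + B ** matrix_inv D) *v x)))"
proof -
  have s: "transpose (matrix_inv D) = matrix_inv D" using minv_sym assms by blast
  have ps: "transpose (A - B ** matrix_inv D ** transpose B) = A - B ** matrix_inv D ** transpose B"
    using assms(1) s by (simp add: tr_diff matrix_transpose_mul matrix_mul_assoc)
  show ?thesis unfolding qmi_set_def mem_Collect_eq quad_blk
    by (simp only: complete_sq[OF assms(2,3)] psd_form[OF ps assms(2)])
qed

lemma psd_of_posdef: "posdef M \<Longrightarrow> 0 \<le> inner x (M *v x)"
  unfolding posdef_def by (cases "x = 0") (auto intro: less_imp_le)

lemma psd_of_negdef: "negdef M \<Longrightarrow> 0 \<le> inner x ((- M) *v x)"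
  unfolding negdef_def by (cases "x = 0") (auto simp: mv_neg intro: less_imp_le)

theorem theoremA1:
  fixes Psi11 :: "real^'p^'p" and Psi12 :: "real^'q^'p" and Psi22 :: "real^'q^'q"
    and V :: "real^'qh^'q" and W :: "real^'ph^'p"
  assumes "transpose Psi11 = Psi11" and "transpose Psi22 = Psi22"
    and "negdef Psi22"
    and "posdef (Psi11 - Psi12 ** matrix_inv Psi22 ** transpose Psi12)"
    and "rank V = CARD('qh)" and "rank W = CARD('ph)"
    and "CARD('ph) \<le> CARD('p)" and "CARD('qh) \<le> CARD('q)"
  shows "(\<lambda>Z. transpose W ** Z ** V) ` qmi_set (blk Psi11 Psi12 (transpose Psi12) Psi22) =
    qmi_set (blk
      (transpose W ** ((Psi11 - Psi12 ** matrix_inv Psi22 ** transpose Psi12)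
          + Psi12 ** matrix_inv Psi22 ** V ** matrix_inv (transpose V ** matrix_inv Psi22 ** V)
            ** transpose V ** matrix_inv Psi22 ** transpose Psi12) ** W)
      (transpose W ** Psi12 ** matrix_inv Psi22 ** V ** matrix_inv (transpose V ** matrix_inv Psi22 ** V))
      (matrix_inv (transpose V ** matrix_inv Psi22 ** V) ** transpose V ** matrix_inv Psi22 ** transpose Psi12 ** W)
      (matrix_inv (transpose V ** matrix_inv Psi22 ** V)))"
proof -
  define Hi where "Hi = matrix_inv Psi22"
  define P where "P = Psi11 - Psi12 ** Hi ** transpose Psi12"
  define K where "K = transpose V ** Hi ** V"
  define Ah where "Ah = matrix_inv K"
  define G where "G = transpose W ** P ** W"
  define Gi where "Gi = matrix_inv G"
  define H11 where "H11 = transpose W ** (P + Psi12 ** Hi ** V ** Ah ** transpose V ** Hi ** transpose Psi12) ** W"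
  define H12 where "H12 = transpose W ** Psi12 ** Hi ** V ** Ah"
  have i22: "invertible Psi22" using assms(3) negdef_inv by blast
  have Hs: "transpose Hi = Hi" unfolding Hi_def using minv_sym[OF i22 assms(2)] .
  have nHi: "negdef Hi" unfolding Hi_def using negdef_minv[OF assms(3)] .
  have HP: "Hi ** Psi22 = mat 1" "Psi22 ** Hi = mat 1" unfolding Hi_def using minv[OF i22] by auto
  have injV: "inj ((*v) V)" using assms(5) full_rank_injective by blast
  have injW: "inj ((*v) W)" using assms(6) full_rank_injective by blast
  have nK: "negdef K" unfolding K_def using negdef_cong[OF nHi injV] .
  have iK: "invertible K" using nK negdef_inv by blast
  have Ks: "transpose K = K" using nK negdef_def by blast
  have Ahs: "transpose Ah = Ah" unfolding Ah_def using minv_sym[OF iK Ks] .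
  have AhK: "Ah ** K = mat 1" "K ** Ah = mat 1" unfolding Ah_def using minv[OF iK] by auto
  have iAh: "invertible Ah" using AhK invertible_def by blast
  have mAh: "matrix_inv Ah = K" using minv_unique[OF AhK(1)] .
  have pP: "posdef P" unfolding P_def Hi_def using assms(4) .
  have Ps: "transpose P = P" using pP posdef_def by blast
  have pG: "posdef G" unfolding G_def using posdef_cong[OF pP injW] .
  have iG: "invertible G" using pG posdef_inv by blast
  have Gs: "transpose G = G" using pG posdef_def by blast
  have Gis: "transpose Gi = Gi" unfolding Gi_def using minv_sym[OF iG Gs] .
  have GGi: "G ** Gi = mat 1" unfolding Gi_def using minv[OF iG] by auto
  have H21: "Ah ** transpose V ** Hi ** transpose Psi12 ** W = transpose H12"
    unfolding H12_def by (simp add: matrix_transpose_mul matrix_mul_assoc Ahs Hs)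
  have H11s: "transpose H11 = H11"
    unfolding H11_def by (simp add: matrix_transpose_mul matrix_mul_assoc Ahs Hs Ps tr_add)
  have eAK: "\<And>Y :: real^'qh^'ph. Y ** Ah ** transpose V ** Hi ** V = Y"
  proof -
    fix Y :: "real^'qh^'ph"
    have "Y ** Ah ** transpose V ** Hi ** V = Y ** (Ah ** K)" unfolding K_def by (simp add: matrix_mul_assoc)
    thus "Y ** Ah ** transpose V ** Hi ** V = Y" using AhK by simp
  qed
  have H12K: "H12 ** matrix_inv Ah = transpose W ** Psi12 ** Hi ** V"
    unfolding mAh H12_def K_def by (simp add: matrix_mul_assoc eAK)
  have Hhat: "H11 - H12 ** matrix_inv Ah ** transpose H12 = G"
    unfolding H12K H11_def G_def
    by (simp add: H12_def matrix_transpose_mul Ahs Hs matrix_mul_assoc matrix_add_ldistrib mm_add_r)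
  have char1: "\<And>Z. Z \<in> qmi_set (blk Psi11 Psi12 (transpose Psi12) Psi22) \<longleftrightarrow>
      (\<forall>x. 0 \<le> inner x (P *v x) + inner (transpose (Z + Psi12 ** Hi) *v x) (Psi22 *v (transpose (Z + Psi12 ** Hi) *v x)))"
    using char[OF assms(1,2) i22] unfolding P_def Hi_def .
  have char2: "\<And>Zh. Zh \<in> qmi_set (blk H11 H12 (transpose H12) Ah) \<longleftrightarrow>
      (\<forall>y. 0 \<le> inner y (G *v y) + inner (transpose (Zh + transpose W ** Psi12 ** Hi ** V) *v y)
             (Ah *v (transpose (Zh + transpose W ** Psi12 ** Hi ** V) *v y)))"
    using char[OF H11s Ahs iAh, of _ H12] unfolding Hhat unfolding H12K .
  have K2: "\<And>u. inner u (Psi22 *v u) \<le> inner (transpose V *v u) (Ah *v (transpose V *v u))"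
  proof -
    fix u :: "real^'q"
    have ms: "transpose (- Hi) = - Hi" using Hs by (simp add: tr_neg)
    have mps: "\<And>x. 0 \<le> inner x ((- Hi) *v x)" using psd_of_negdef[OF nHi] .
    have eqK: "transpose V ** (- Hi) ** V = - K" unfolding K_def by (simp add: mm_neg_l mm_neg_r)
    have "(- K) ** (- Ah) = mat 1" using AhK by (simp add: mm_neg_l mm_neg_r)
    hence iK': "invertible (- K)" and mK': "matrix_inv (- K) = - Ah"
      using invertible_right_inverse minv_unique by blast+
    have Mx: "(- Hi) *v (Psi22 *v u) = - u"
      by (simp add: mv_neg mm_neg_l matrix_vector_mul_assoc HP)
    from QL[OF ms mps, of V "Psi22 *v u"] show "inner u (Psi22 *v u) \<le> inner (transpose V *v u) (Ah *v (transpose V *v u))"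
      unfolding eqK Mx mK' using iK'
      by (simp add: mv_neg mv_neg_r) (metis inner_commute)
  qed
  have "(\<lambda>Z. transpose W ** Z ** V) ` qmi_set (blk Psi11 Psi12 (transpose Psi12) Psi22)
        = qmi_set (blk H11 H12 (transpose H12) Ah)"
  proof (intro set_eqI iffI)
    fix Zh assume "Zh \<in> (\<lambda>Z. transpose W ** Z ** V) ` qmi_set (blk Psi11 Psi12 (transpose Psi12) Psi22)"
    then obtain Z where Z: "Z \<in> qmi_set (blk Psi11 Psi12 (transpose Psi12) Psi22)"
      and Zh: "Zh = transpose W ** Z ** V" by blast
    define X where "X = Z + Psi12 ** Hi"
    have hx: "\<And>x. 0 \<le> inner x (P *v x) + inner (transpose X *v x) (Psi22 *v (transpose X *v x))"
      using char1 Z unfolding X_def by blast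
    have Xh: "Zh + transpose W ** Psi12 ** Hi ** V = transpose W ** X ** V"
      unfolding Zh X_def by (simp add: matrix_add_ldistrib mm_add_r matrix_mul_assoc)
    show "Zh \<in> qmi_set (blk H11 H12 (transpose H12) Ah)"
      unfolding char2 Xh
    proof
      fix y :: "real^'ph"
      define u where "u = transpose X *v (W *v y)"
      have t1: "transpose (transpose W ** X ** V) *v y = transpose V *v u"
        unfolding u_def by (simp add: matrix_transpose_mul matrix_vector_mul_assoc)
      have t2: "inner y (G *v y) = inner (W *v y) (P *v (W *v y))"
        unfolding G_def using qf_prod[of y "transpose W" P] by simp
      show "0 \<le> inner y (G *v y) + inner (transpose (transpose W ** X ** V) *v y)
             (Ah *v (transpose (transpose W ** X ** V) *v y))"
        unfolding t1 t2 using hx[of "W *v y"] K2[of u] unfolding u_def by linarith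
    qed
  next
    fix Zh assume Zh: "Zh \<in> qmi_set (blk H11 H12 (transpose H12) Ah)"
    define Xh where "Xh = Zh + transpose W ** Psi12 ** Hi ** V"
    have hy: "\<And>y. 0 \<le> inner y (G *v y) + inner (transpose Xh *v y) (Ah *v (transpose Xh *v y))"
      using Zh unfolding char2 Xh_def by blast
    define X where "X = P ** W ** Gi ** Xh ** Ah ** transpose V ** Hi"
    define Z where "Z = X - Psi12 ** Hi"
    have eGG: "transpose W ** X ** V = Xh"
    proof -
      have "transpose W ** X ** V = (G ** Gi) ** (Xh ** Ah ** transpose V ** Hi ** V)"
        unfolding X_def G_def by (simp add: matrix_mul_assoc)
      thus ?thesis using GGi eAK by simp
    qed
    have "transpose W ** Z ** V = Zh"
      unfolding Z_def by (simp add: mm_diff_l mm_diff_r eGG Xh_def matrix_mul_assoc)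
    moreover have "Z \<in> qmi_set (blk Psi11 Psi12 (transpose Psi12) Psi22)"
      unfolding char1
    proof
      fix x :: "real^'p"
      define b where "b = transpose W *v (P *v x)"
      define y where "y = Gi *v b"
      define t where "t = transpose Xh *v y"
      define s where "s = V *v (Ah *v t)"
      have zx: "Z + Psi12 ** Hi = X" unfolding Z_def by simp
      have tX: "transpose X *v x = Hi *v s"
        unfolding X_def s_def t_def y_def b_def
        by (simp add: matrix_transpose_mul matrix_vector_mul_assoc Hs Ahs Gis Ps)
      have PH: "Psi22 *v (Hi *v s) = s" by (simp add: matrix_vector_mul_assoc HP)
      have KA: "K *v (Ah *v t) = t" by (simp add: matrix_vector_mul_assoc AhK)
      have sH: "inner s (Hi *v s) = inner (Ah *v t) (K *v (Ah *v t))"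
        unfolding s_def K_def by (simp add: matrix_vector_mul_assoc[symmetric] dot_mv)
      have e1: "inner (Hi *v s) (Psi22 *v (Hi *v s)) = inner t (Ah *v t)"
        unfolding PH using sH KA by (simp add: inner_commute)
      have Gy: "G *v y = b" unfolding y_def by (simp add: matrix_vector_mul_assoc GGi)
      have e2: "inner y (G *v y) = inner b (Gi *v b)" unfolding Gy unfolding y_def by (rule inner_commute)
      have e3: "inner b (Gi *v b) \<le> inner x (P *v x)"
        unfolding b_def Gi_def G_def
        using QL[OF Ps psd_of_posdef[OF pP], of W x] iG unfolding G_def by simp
      show "0 \<le> inner x (P *v x) + inner (transpose (Z + Psi12 ** Hi) *v x)
              (Psi22 *v (transpose (Z + Psi12 ** Hi) *v x))"
        unfolding zx tX e1 using hy[of y] e2 e3 unfolding t_def by linarith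
    qed
    ultimately show "Zh \<in> (\<lambda>Z. transpose W ** Z ** V) ` qmi_set (blk Psi11 Psi12 (transpose Psi12) Psi22)"
      by blast
  qed
  thus ?thesis
    unfolding H11_def H12_def Ah_def K_def G_def P_def Hi_def H21[unfolded H12_def Ah_def K_def Hi_def]
    by (simp only: )
qed

end
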